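(* Let $q$ be an acyclic Boolean conjunctive query. If the attack graph of $q$ contains a strong cycle, then it contains a strong cycle of length $2$.
   Context: Atoms $R(s_1,\dots,s_n)$ have variables or constants as arguments; each relation name has a signature $[n,k]$ with primary key positions $1,\dots,k$. $\mathit{key}(F)$ is the set of variables in the primary-key positions of atom $F$, $\mathit{vars}(F)$ the set of variables of $F$. A Boolean conjunctive query $q$ is a finite set of atoms; $\mathit{vars}(q)$ its variables. A join tree for $q$ is an undirected tree on the atoms of $q$ such that whenever a variable occurs in atoms $F$ and $G$ it occurs in every atom on the path between them; the edge between $F$ and $G$ is labeled $\mathit{vars}(F)\cap\mathit{vars}(G)$. $q$ is acyclic if it has a join tree. $\mathit{FD}(q)=\{\mathit{key}(F)\to\mathit{vars}(F)\mid F\in q\}$ (functional dependencies over variables); $F^{+,q}=\{x\in\mathit{vars}(q)\mid \mathit{FD}(q\setminus\{F\})\models\mathit{key}(F)\to x\}$; $F^{\oplus,q}=\{x\in\mathit{vars}(q)\mid \mathit{FD}(q)\models\mathit{key}(F)\to x\}$. The attack graph of $q$, computed from any join tree $\tau$ (independent of the choice), has an edge (attack) $F\to G$ for distinct atoms iff every label $L$ on the path between $F$ and $G$ in $\tau$ satisfies $L\not\subseteq F^{+,q}$. An attack $F\to G$ is weak if $\mathit{key}(G)\subseteq F^{\oplus,q}$ and strong otherwise. A cycle of length $n$ is a sequence of attacks $F_0\to F_1\to\dots\to F_{n-1}\to F_0$ with pairwise distinct $F_i$; it is strong if at least one of its attacks is strong. *)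

theory Defs
  imports Main
begin

datatype ('v, 'c) qterm = Var 'v | Cst 'c

datatype ('r, 'v, 'c) atom = Atom (rel: 'r) (args: "('v, 'c) qterm list")

text \<open>A signature assigns to each relation name a pair (n, k):
  arity n, primary key positions 1..k.\<close>
type_synonym 'r signature = "'r \<Rightarrow> nat \<times> nat"

definition wf_atom :: "'r signature \<Rightarrow> ('r, 'v, 'c) atom \<Rightarrow> bool" where
  "wf_atom sig F \<longleftrightarrow> length (args F) = fst (sig (rel F))
     \<and> 1 \<le> snd (sig (rel F)) \<and> snd (sig (rel F)) \<le> fst (sig (rel F))"

definition key :: "'r signature \<Rightarrow> ('r, 'v, 'c) atom \<Rightarrow> 'v set" where
  "key sig F = {x. \<exists>i < snd (sig (rel F)). i < length (args F) \<and> args F ! i = Var x}"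

definition vars :: "('r, 'v, 'c) atom \<Rightarrow> 'v set" where
  "vars F = {x. Var x \<in> set (args F)}"

definition qvars :: "('r, 'v, 'c) atom set \<Rightarrow> 'v set" where
  "qvars q = (\<Union>F\<in>q. vars F)"

definition bcq :: "'r signature \<Rightarrow> ('r, 'v, 'c) atom set \<Rightarrow> bool" where
  "bcq sig q \<longleftrightarrow> finite q \<and> (\<forall>F\<in>q. wf_atom sig F)"

definition tree_path :: "('a \<times> 'a) set \<Rightarrow> 'a \<Rightarrow> 'a \<Rightarrow> 'a list \<Rightarrow> bool" where
  "tree_path E F G p \<longleftrightarrow> p \<noteq> [] \<and> hd p = F \<and> last p = G \<and> distinct p
     \<and> (\<forall>i. Suc i < length p \<longrightarrow> (p ! i, p ! Suc i) \<in> E)"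

definition is_tree :: "'a set \<Rightarrow> ('a \<times> 'a) set \<Rightarrow> bool" where
  "is_tree V E \<longleftrightarrow> E \<subseteq> V \<times> V \<and> sym E \<and> irrefl E
     \<and> (\<forall>F\<in>V. \<forall>G\<in>V. \<exists>!p. tree_path E F G p)"

definition join_tree :: "('r, 'v, 'c) atom set \<Rightarrow> (('r, 'v, 'c) atom \<times> ('r, 'v, 'c) atom) set \<Rightarrow> bool" where
  "join_tree q E \<longleftrightarrow> is_tree q E
     \<and> (\<forall>F\<in>q. \<forall>G\<in>q. \<forall>x. x \<in> vars F \<and> x \<in> vars G \<longrightarrow>
          (\<forall>p. tree_path E F G p \<longrightarrow> (\<forall>H\<in>set p. x \<in> vars H)))"

definition acyclic_query :: "('r, 'v, 'c) atom set \<Rightarrow> bool" where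
  "acyclic_query q \<longleftrightarrow> (\<exists>E. join_tree q E)"

text \<open>FD(q) as a set of pairs (lhs, rhs); closure of a variable set under a set of FDs
  (FD(q) \<Turnstile> X \<rightarrow> x  iff  x is in the closure of X).\<close>
definition FD :: "'r signature \<Rightarrow> ('r, 'v, 'c) atom set \<Rightarrow> ('v set \<times> 'v set) set" where
  "FD sig q = {(key sig F, vars F) | F. F \<in> q}"

inductive_set fd_closure :: "('v set \<times> 'v set) set \<Rightarrow> 'v set \<Rightarrow> 'v set"
  for \<Sigma> :: "('v set \<times> 'v set) set" and X :: "'v set" where
  base: "x \<in> X \<Longrightarrow> x \<in> fd_closure \<Sigma> X"
| step: "(Y, Z) \<in> \<Sigma> \<Longrightarrow> (\<And>y. y \<in> Y \<Longrightarrow> y \<in> fd_closure \<Sigma> X) \<Longrightarrow> z \<in> Z \<Longrightarrow> z \<in> fd_closure \<Sigma> X"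

definition plus_closure :: "'r signature \<Rightarrow> ('r, 'v, 'c) atom set \<Rightarrow> ('r, 'v, 'c) atom \<Rightarrow> 'v set" where
  "plus_closure sig q F = {x \<in> qvars q. x \<in> fd_closure (FD sig (q - {F})) (key sig F)}"

definition oplus_closure :: "'r signature \<Rightarrow> ('r, 'v, 'c) atom set \<Rightarrow> ('r, 'v, 'c) atom \<Rightarrow> 'v set" where
  "oplus_closure sig q F = {x \<in> qvars q. x \<in> fd_closure (FD sig q) (key sig F)}"

text \<open>Attack F \<rightarrow> G, computed from a join tree of q: every label on the tree path
  between F and G is not contained in F^{+,q}.\<close>
definition attacks :: "'r signature \<Rightarrow> ('r, 'v, 'c) atom set \<Rightarrow> ('r, 'v, 'c) atom \<Rightarrow> ('r, 'v, 'c) atom \<Rightarrow> bool" where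
  "attacks sig q F G \<longleftrightarrow> F \<in> q \<and> G \<in> q \<and> F \<noteq> G \<and>
     (\<exists>E p. join_tree q E \<and> tree_path E F G p \<and>
        (\<forall>i. Suc i < length p \<longrightarrow> \<not> (vars (p ! i) \<inter> vars (p ! Suc i) \<subseteq> plus_closure sig q F)))"

definition weak_attack :: "'r signature \<Rightarrow> ('r, 'v, 'c) atom set \<Rightarrow> ('r, 'v, 'c) atom \<Rightarrow> ('r, 'v, 'c) atom \<Rightarrow> bool" where
  "weak_attack sig q F G \<longleftrightarrow> attacks sig q F G \<and> key sig G \<subseteq> oplus_closure sig q F"

definition strong_attack :: "'r signature \<Rightarrow> ('r, 'v, 'c) atom set \<Rightarrow> ('r, 'v, 'c) atom \<Rightarrow> ('r, 'v, 'c) atom \<Rightarrow> bool" where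
  "strong_attack sig q F G \<longleftrightarrow> attacks sig q F G \<and> \<not> key sig G \<subseteq> oplus_closure sig q F"

definition attack_cycle :: "'r signature \<Rightarrow> ('r, 'v, 'c) atom set \<Rightarrow> ('r, 'v, 'c) atom list \<Rightarrow> bool" where
  "attack_cycle sig q cs \<longleftrightarrow> cs \<noteq> [] \<and> distinct cs \<and>
     (\<forall>i < length cs. attacks sig q (cs ! i) (cs ! ((i + 1) mod length cs)))"

definition strong_cycle :: "'r signature \<Rightarrow> ('r, 'v, 'c) atom set \<Rightarrow> ('r, 'v, 'c) atom list \<Rightarrow> bool" where
  "strong_cycle sig q cs \<longleftrightarrow> attack_cycle sig q cs \<and>
     (\<exists>i < length cs. strong_attack sig q (cs ! i) (cs ! ((i + 1) mod length cs)))"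

end

theory Submission
  imports Defs
begin

definition Rel :: "'r signature \<Rightarrow> ('r, 'v, 'c) atom set \<Rightarrow> ('r, 'v, 'c) atom \<Rightarrow> (('r, 'v, 'c) atom \<times> ('r, 'v, 'c) atom) set" where
  "Rel sig q F = {(A,B). A \<in> q \<and> B \<in> q \<and> (\<exists>x. x \<in> vars A \<and> x \<in> vars B \<and> x \<notin> plus_closure sig q F)}"

lemma Rel_in_q: "(F,G) \<in> (Rel sig q H)\<^sup>* \<Longrightarrow> F \<in> q \<Longrightarrow> G \<in> q"
  by (induction rule: rtrancl_induct) (auto simp: Rel_def)

lemma attacks_reach:
  assumes "attacks sig q F G" shows "(F,G) \<in> (Rel sig q F)\<^sup>*"
proof -
  from assms obtain E p where jt: "join_tree q E" and tp: "tree_path E F G p"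
    and lab: "\<forall>i. Suc i < length p \<longrightarrow> \<not> (vars (p ! i) \<inter> vars (p ! Suc i) \<subseteq> plus_closure sig q F)"
    unfolding attacks_def by blast
  have Eq: "E \<subseteq> q \<times> q" using jt unfolding join_tree_def is_tree_def by blast
  have "\<forall>k < length p. (F, p ! k) \<in> (Rel sig q F)\<^sup>*"
  proof (intro allI impI)
    fix k assume "k < length p"
    then show "(F, p ! k) \<in> (Rel sig q F)\<^sup>*"
    proof (induction k)
      case 0 then show ?case using tp by (simp add: tree_path_def hd_conv_nth[symmetric])
    next
      case (Suc k)
      have e: "(p!k, p!Suc k) \<in> E" using tp Suc.prems unfolding tree_path_def by blast
      have "(p!k, p!Suc k) \<in> Rel sig q F" using e Eq lab Suc.prems unfolding Rel_def by blast
      then show ?case using Suc by (meson Suc_lessD rtrancl.rtrancl_into_rtrancl)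
    qed
  qed
  moreover have "G = p ! (length p - 1)" "length p - 1 < length p" using tp
    by (auto simp: tree_path_def last_conv_nth)
  ultimately show ?thesis by metis
qed

lemma shortcut:
  "w \<noteq> [] \<Longrightarrow> successively Q w \<Longrightarrow> \<exists>p. p \<noteq> [] \<and> hd p = hd w \<and> last p = last w \<and> distinct p \<and> successively Q p"
proof (induction "length w" arbitrary: w rule: less_induct)
  case less
  show ?case
  proof (cases "distinct w")
    case True then show ?thesis using less.prems by blast
  next
    case False
    then obtain xs ys zs y where w: "w = xs@[y]@ys@[y]@zs" using not_distinct_decomp by blast
    let ?w = "xs@[y]@zs"
    have s: "successively Q ?w" using less.prems(2) unfolding w
      by (auto simp: successively_append_iff successively_Cons)
    have l: "length ?w < length w" using w by simp
    have h: "hd ?w = hd w" "last ?w = last w" using w by (cases xs; cases zs; simp)+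
    obtain p where "p \<noteq> [] \<and> hd p = hd ?w \<and> last p = last ?w \<and> distinct p \<and> successively Q p"
      using less(1)[OF l _ s] by auto
    then show ?thesis using h by metis
  qed
qed

lemma join_tree_path: "join_tree q E \<Longrightarrow> Y \<in> q \<Longrightarrow> Z \<in> q \<Longrightarrow> \<exists>p. tree_path E Y Z p"
  unfolding join_tree_def is_tree_def by (meson ex1E)

lemma join_tree_var: "join_tree q E \<Longrightarrow> Y \<in> q \<Longrightarrow> Z \<in> q \<Longrightarrow> x \<in> vars Y \<Longrightarrow> x \<in> vars Z
   \<Longrightarrow> tree_path E Y Z p \<Longrightarrow> H \<in> set p \<Longrightarrow> x \<in> vars H"
  unfolding join_tree_def by blast

lemma walk_ex:
  assumes jt: "join_tree q E" and r: "(F,G) \<in> (Rel sig q F)\<^sup>*" and Fq: "F \<in> q"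
  shows "\<exists>w. w \<noteq> [] \<and> hd w = F \<and> last w = G \<and>
     successively (\<lambda>a b. (a,b) \<in> E \<and> \<not> (vars a \<inter> vars b \<subseteq> plus_closure sig q F)) w"
  using r
proof (induction rule: rtrancl_induct)
  case base then show ?case by (intro exI[of _ "[F]"]) simp
next
  case (step Y Z)
  let ?Q = "\<lambda>a b. (a,b) \<in> E \<and> \<not> (vars a \<inter> vars b \<subseteq> plus_closure sig q F)"
  from step.IH obtain w where w: "w \<noteq> []" "hd w = F" "last w = Y" "successively ?Q w" by blast
  from step.hyps(2) obtain x where Yq: "Y \<in> q" and Zq: "Z \<in> q" and x: "x \<in> vars Y" "x \<in> vars Z"
    "x \<notin> plus_closure sig q F" unfolding Rel_def by blast
  from join_tree_path[OF jt Yq Zq] obtain p where tp: "tree_path E Y Z p" by blast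
  have allx: "\<And>H. H \<in> set p \<Longrightarrow> x \<in> vars H" using join_tree_var[OF jt Yq Zq x(1,2) tp] .
  have sp: "successively ?Q p"
    unfolding successively_conv_nth
  proof (intro allI impI)
    fix i assume i: "Suc i < length p"
    have "(p!i, p!Suc i) \<in> E" using tp i unfolding tree_path_def by blast
    moreover have "x \<in> vars (p!i)" "x \<in> vars (p ! Suc i)" using allx i by auto
    ultimately show "?Q (p!i) (p!Suc i)" using x(3) by blast
  qed
  have pne: "p \<noteq> []" "hd p = Y" and p2: "last p = Z" using tp unfolding tree_path_def by auto
  have p1: "p = Y # tl p" using pne by (metis list.collapse)
  show ?case
  proof (intro exI[of _ "w @ tl p"] conjI)
    show "w @ tl p \<noteq> []" using w by simp
    show "hd (w @ tl p) = F" using w by simp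
    show "last (w @ tl p) = Z"
    proof (cases "tl p = []")
      case True
      then have "p = [Y]" using p1 by simp
      then show ?thesis using p2 w True by simp
    next
      case False
      have "last (w @ tl p) = last (tl p)" using False by simp
      also have "\<dots> = last p" using p1 False by (metis last_ConsR)
      finally show ?thesis using p2 by simp
    qed
    have "successively ?Q (Y # tl p)" using sp p1 by simp
    then have "successively ?Q (tl p)" "tl p = [] \<or> ?Q Y (hd (tl p))"
      by (auto simp add: successively_Cons)
    then show "successively ?Q (w @ tl p)"
      using w by (auto simp: successively_append_iff)
  qed
qed

lemma reach_attacks:
  assumes jt: "join_tree q E" and "F \<in> q" "G \<in> q" "F \<noteq> G" and r: "(F,G) \<in> (Rel sig q F)\<^sup>*"
  shows "attacks sig q F G"
proof -
  let ?Q = "\<lambda>a b. (a,b) \<in> E \<and> \<not> (vars a \<inter> vars b \<subseteq> plus_closure sig q F)"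
  obtain w where w: "w \<noteq> []" "hd w = F" "last w = G" "successively ?Q w"
    using walk_ex[OF jt r assms(2)] by blast
  from shortcut[OF w(1) w(4)] obtain p where p: "p \<noteq> []" "hd p = F" "last p = G" "distinct p" "successively ?Q p"
    using w by auto
  have "tree_path E F G p" using p unfolding tree_path_def successively_conv_nth by blast
  moreover have "\<forall>i. Suc i < length p \<longrightarrow> \<not> (vars (p ! i) \<inter> vars (p ! Suc i) \<subseteq> plus_closure sig q F)"
    using p(5) unfolding successively_conv_nth by blast
  ultimately show ?thesis using assms unfolding attacks_def by blast
qed

lemma key_sub_vars: "key sig F \<subseteq> vars F"
  unfolding key_def vars_def by (auto, metis nth_mem)

lemma vars_sub_qvars: "F \<in> q \<Longrightarrow> vars F \<subseteq> qvars q"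
  unfolding qvars_def by blast

lemma fd_step: "K \<in> q' \<Longrightarrow> key sig K \<subseteq> fd_closure (FD sig q') X \<Longrightarrow> vars K \<subseteq> fd_closure (FD sig q') X"
proof
  fix z assume K: "K \<in> q'" and k: "key sig K \<subseteq> fd_closure (FD sig q') X" and z: "z \<in> vars K"
  have "(key sig K, vars K) \<in> FD sig q'" using K unfolding FD_def by blast
  then show "z \<in> fd_closure (FD sig q') X" using k z by (meson fd_closure.step subsetD)
qed

lemma fd_mono_set: "Y \<subseteq> fd_closure S X \<Longrightarrow> fd_closure S Y \<subseteq> fd_closure S X"
proof
  fix x assume Y: "Y \<subseteq> fd_closure S X" and x: "x \<in> fd_closure S Y"
  from x show "x \<in> fd_closure S X"
  proof (induction rule: fd_closure.induct)
    case (base x) then show ?case using Y by blast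
  next
    case (step Y' Z z) then show ?case by (meson fd_closure.step)
  qed
qed

lemma lemmaA:
  assumes "F \<noteq> G" "(F,G) \<in> (Rel sig q F)\<^sup>*" "G \<in> q"
  shows "\<not> key sig G \<subseteq> plus_closure sig q F"
proof
  assume k: "key sig G \<subseteq> plus_closure sig q F"
  from assms(1,2) obtain Y where "(Y,G) \<in> Rel sig q F"
    by (metis rtranclE)
  then obtain x where x: "x \<in> vars G" "x \<notin> plus_closure sig q F" unfolding Rel_def by blast
  have "key sig G \<subseteq> fd_closure (FD sig (q - {F})) (key sig F)" using k unfolding plus_closure_def by blast
  then have "vars G \<subseteq> fd_closure (FD sig (q - {F})) (key sig F)" using assms(1,3) fd_step[of G "q - {F}"] by blast
  then have "x \<in> plus_closure sig q F" using x(1) vars_sub_qvars[OF assms(3)] unfolding plus_closure_def by blast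
  then show False using x(2) by blast
qed

lemma weak_mono: "key sig G \<subseteq> oplus_closure sig q F \<Longrightarrow> oplus_closure sig q G \<subseteq> oplus_closure sig q F"
proof -
  assume "key sig G \<subseteq> oplus_closure sig q F"
  then have "key sig G \<subseteq> fd_closure (FD sig q) (key sig F)" unfolding oplus_closure_def by blast
  then have "fd_closure (FD sig q) (key sig G) \<subseteq> fd_closure (FD sig q) (key sig F)" by (rule fd_mono_set)
  then show ?thesis unfolding oplus_closure_def by blast
qed

lemma reachB:
  assumes Fq: "F \<in> q" and Gq: "G \<in> q" and FG: "(F,G) \<in> (Rel sig q F)\<^sup>*" "F \<noteq> G"
    and GH: "(G,H) \<in> (Rel sig q G)\<^sup>*" and nGF: "(G,F) \<notin> (Rel sig q G)\<^sup>*"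
  shows "(F,H) \<in> (Rel sig q F)\<^sup>*"
proof -
  define D where "D = {X. (G,X) \<in> (Rel sig q G)\<^sup>*}"
  define W where "W = plus_closure sig q G \<union> (\<Union>X\<in>q-D. vars X)"
  have Dq: "K \<in> q" if "K \<in> D" for K
  proof -
    have "(G,K) \<in> (Rel sig q G)\<^sup>*" using that by (simp add: D_def)
    then show ?thesis by (rule Rel_in_q) (rule Gq)
  qed
  have Dclosed: "\<And>K X y. K \<in> D \<Longrightarrow> X \<in> q \<Longrightarrow> y \<in> vars K \<Longrightarrow> y \<in> vars X
      \<Longrightarrow> y \<notin> plus_closure sig q G \<Longrightarrow> X \<in> D"
  proof -
    fix K X y assume a: "K \<in> D" "X \<in> q" "y \<in> vars K" "y \<in> vars X" "y \<notin> plus_closure sig q G"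
    have "K \<in> q" using Dq a(1) by blast
    then have "(K,X) \<in> Rel sig q G" using a by (auto simp: Rel_def)
    moreover have "(G,K) \<in> (Rel sig q G)\<^sup>*" using a(1) by (simp add: D_def)
    ultimately have "(G,X) \<in> (Rel sig q G)\<^sup>*" by (rule rtrancl.rtrancl_into_rtrancl[rotated])
    then show "X \<in> D" by (simp add: D_def)
  qed
  have FnD: "F \<notin> D" using nGF by (simp add: D_def)
  have keyG: "\<not> key sig G \<subseteq> plus_closure sig q F" using lemmaA[OF FG(2) FG(1) Gq] .
  have cl: "x \<in> W" if "x \<in> fd_closure (FD sig (q - {F})) (key sig F)" for x
    using that
  proof (induction rule: fd_closure.induct)
    case (base x)
    then show ?case using key_sub_vars[of sig F] Fq FnD unfolding W_def by blast
  next
    case (step Y Z z)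
    from step.hyps(1) obtain K where K: "Y = key sig K" "Z = vars K" "K \<in> q" "K \<noteq> F"
      unfolding FD_def by blast
    have Ycl: "Y \<subseteq> fd_closure (FD sig (q - {F})) (key sig F)" "Y \<subseteq> W"
      using step.hyps(2) step.IH by blast+
    have zZ: "z \<in> Z" by (rule step.hyps(3))
    show ?case
    proof (cases "K \<in> D")
      case False then show ?thesis using K zZ unfolding W_def by blast
    next
      case True
      have KG: "K \<noteq> G"
      proof
        assume "K = G"
        then have "key sig G \<subseteq> plus_closure sig q F"
          using Ycl(1) K(1) key_sub_vars[of sig G] vars_sub_qvars[OF Gq] unfolding plus_closure_def by blast
        then show False using keyG by blast
      qed
      have "key sig K \<subseteq> plus_closure sig q G"
      proof
        fix y assume y: "y \<in> key sig K"
        have yW: "y \<in> W" using y Ycl(2) K(1) by blast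
        have yK: "y \<in> vars K" using y key_sub_vars[of sig K] by blast
        show "y \<in> plus_closure sig q G"
        proof (rule ccontr)
          assume n: "y \<notin> plus_closure sig q G"
          then obtain X where "X \<in> q" "X \<notin> D" "y \<in> vars X" using yW unfolding W_def by blast
          then show False using Dclosed[OF True _ yK _ n] by blast
        qed
      qed
      then have "key sig K \<subseteq> fd_closure (FD sig (q - {G})) (key sig G)" unfolding plus_closure_def by blast
      then have "vars K \<subseteq> fd_closure (FD sig (q - {G})) (key sig G)" using fd_step[of K "q - {G}"] K KG by blast
      then have "vars K \<subseteq> plus_closure sig q G" using vars_sub_qvars[OF K(3)] unfolding plus_closure_def by blast
      then show ?thesis using K zZ unfolding W_def by blast
    qed
  qed
  have PF: "plus_closure sig q F \<subseteq> W" using cl unfolding plus_closure_def by blast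
  have "(F,X) \<in> (Rel sig q F)\<^sup>*" if "(G,X) \<in> (Rel sig q G)\<^sup>*" for X
    using that
  proof (induction rule: rtrancl_induct)
    case base then show ?case using FG(1) .
  next
    case (step Y Z)
    from step.hyps(2) obtain x where Yq: "Y \<in> q" and Zq: "Z \<in> q" and x: "x \<in> vars Y" "x \<in> vars Z"
      "x \<notin> plus_closure sig q G" by (auto simp: Rel_def)
    have "(G,Z) \<in> (Rel sig q G)\<^sup>*" using step.hyps(1,2) by (rule rtrancl.rtrancl_into_rtrancl)
    then have ZD: "Z \<in> D" by (simp add: D_def)
    have "x \<notin> plus_closure sig q F"
    proof
      assume "x \<in> plus_closure sig q F"
      then have "x \<in> W" using PF by blast
      then obtain X' where "X' \<in> q" "X' \<notin> D" "x \<in> vars X'" using x(3) unfolding W_def by blast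
      then show False using Dclosed[OF ZD _ x(2) _ x(3)] by blast
    qed
    then have "(Y,Z) \<in> Rel sig q F" using Yq Zq x by (auto simp: Rel_def)
    with step.IH show ?case by (rule rtrancl.rtrancl_into_rtrancl)
  qed
  then show ?thesis using GH by blast
qed

lemma lemmaB:
  assumes acyc: "acyclic_query q" and a1: "attacks sig q F G" and a2: "attacks sig q G H" and ne: "F \<noteq> H"
  shows "attacks sig q F H \<or> attacks sig q G F"
proof (rule disjCI)
  assume n: "\<not> attacks sig q G F"
  obtain E where jt: "join_tree q E" using acyc unfolding acyclic_query_def by blast
  have q: "F \<in> q" "G \<in> q" "H \<in> q" "F \<noteq> G" using a1 a2 unfolding attacks_def by blast+
  have "(G,F) \<notin> (Rel sig q G)\<^sup>*" using reach_attacks[OF jt q(2) q(1)] q(4) n by metis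
  then have "(F,H) \<in> (Rel sig q F)\<^sup>*"
    using reachB[OF q(1) q(2) attacks_reach[OF a1] q(4) attacks_reach[OF a2]] by blast
  then show "attacks sig q F H" using reach_attacks[OF jt q(1) q(3) ne] by blast
qed

lemma cyc_conv:
  assumes ne: "xs \<noteq> []"
  shows "(\<forall>i<length xs. R (xs!i) (xs!((i+1) mod length xs))) \<longleftrightarrow> successively R xs \<and> R (last xs) (hd xs)"
proof
  assume a: "\<forall>i<length xs. R (xs!i) (xs!((i+1) mod length xs))"
  have "successively R xs" unfolding successively_conv_nth
  proof (intro allI impI)
    fix i assume i: "Suc i < length xs"
    then have "(i+1) mod length xs = Suc i" by simp
    then show "R (xs!i) (xs!Suc i)" using a i by (metis Suc_lessD)
  qed
  moreover have "R (last xs) (hd xs)"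
  proof -
    have l: "length xs - 1 < length xs" using ne by simp
    have "(length xs - 1 + 1) mod length xs = 0" using ne by simp
    then show ?thesis using a l ne by (metis last_conv_nth hd_conv_nth)
  qed
  ultimately show "successively R xs \<and> R (last xs) (hd xs)" by blast
next
  assume a: "successively R xs \<and> R (last xs) (hd xs)"
  show "\<forall>i<length xs. R (xs!i) (xs!((i+1) mod length xs))"
  proof (intro allI impI)
    fix i assume i: "i < length xs"
    show "R (xs!i) (xs!((i+1) mod length xs))"
    proof (cases "Suc i < length xs")
      case True then show ?thesis using a successively_nth[of R xs i] by simp
    next
      case False
      then have "i = length xs - 1" using i by simp
      then have "xs!i = last xs" "(i+1) mod length xs = 0" using ne i by (auto simp: last_conv_nth)
      then show ?thesis using a ne by (simp add: hd_conv_nth)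
    qed
  qed
qed

lemma cyc_rotate1:
  assumes "successively R xs" "R (last xs) (hd xs)" "xs \<noteq> []"
  shows "successively R (rotate1 xs) \<and> R (last (rotate1 xs)) (hd (rotate1 xs))"
proof -
  obtain x ys where xs: "xs = x # ys" using assms(3) by (cases xs) auto
  show ?thesis
  proof (cases "ys = []")
    case True then show ?thesis using assms xs by simp
  next
    case False
    have s: "successively R ys" "R x (hd ys)" using assms(1) xs False by (auto simp: successively_Cons)
    have "R (last ys) x" using assms(2) xs False by simp
    then have "successively R (ys @ [x])" using s False by (simp add: successively_append_iff)
    moreover have "R (last (ys @ [x])) (hd (ys @ [x]))" using s False by simp
    ultimately show ?thesis using xs by simp
  qed
qed

lemma cyc_rotate:
  assumes "successively R xs" "R (last xs) (hd xs)" "xs \<noteq> []"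
  shows "successively R (rotate n xs) \<and> R (last (rotate n xs)) (hd (rotate n xs))"
proof (induction n)
  case 0 then show ?case using assms by simp
next
  case (Suc n)
  have "rotate n xs \<noteq> []" using assms(3) by (simp add: rotate_is_Nil_conv)
  then show ?case using cyc_rotate1[of R "rotate n xs"] Suc by simp
qed

lemma chain_mono:
  "successively (\<lambda>a b. f b \<subseteq> f a) ys \<Longrightarrow> ys \<noteq> [] \<Longrightarrow> f (last ys) \<subseteq> f (hd ys)"
proof (induction ys)
  case Nil then show ?case by simp
next
  case (Cons y ys)
  show ?case
  proof (cases "ys = []")
    case True then show ?thesis by simp
  next
    case False
    then have "f (hd ys) \<subseteq> f y" "successively (\<lambda>a b. f b \<subseteq> f a) ys"
      using Cons.prems(1) by (auto simp: successively_Cons)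
    then show ?thesis using Cons.IH False by auto
  qed
qed


lemma two_cons: "2 \<le> length ys \<Longrightarrow> \<exists>a b r. ys = a # b # r"
  by (cases ys; cases "tl ys") auto

lemma to_cycle:
  "zs \<noteq> [] \<Longrightarrow> distinct zs \<Longrightarrow> successively (attacks sig q) zs \<Longrightarrow> attacks sig q (last zs) (hd zs)
    \<Longrightarrow> attack_cycle sig q zs"
  unfolding attack_cycle_def using cyc_conv[of zs "attacks sig q"] by blast

lemma main:
  assumes acyc: "acyclic_query q"
  shows "length xs = n \<Longrightarrow> strong_cycle sig q xs \<Longrightarrow>
     \<exists>A B. attacks sig q A B \<and> attacks sig q B A \<and> strong_attack sig q A B"
proof (induction n arbitrary: xs rule: less_induct)
  case (less n xs)
  let ?A = "attacks sig q"
  have ac: "attack_cycle sig q xs" using less.prems(2) unfolding strong_cycle_def by blast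
  obtain i where i: "i < length xs" and st: "strong_attack sig q (xs!i) (xs!((i+1) mod length xs))"
    using less.prems(2) unfolding strong_cycle_def by blast
  have ne: "xs \<noteq> []" and dist: "distinct xs"
    and allA: "\<forall>j<length xs. ?A (xs!j) (xs!((j+1) mod length xs))" using ac unfolding attack_cycle_def by blast+
  have len2: "2 \<le> length xs"
  proof (rule ccontr)
    assume "\<not> 2 \<le> length xs"
    moreover have "length xs \<noteq> 0" using ne by simp
    ultimately have "length xs = 1" by linarith
    then have "(i+1) mod length xs = i" using i by simp
    then show False using st unfolding strong_attack_def attacks_def by simp
  qed
  define ys where "ys = rotate i xs"
  have ys0: "ys!0 = xs!i"
    using nth_rotate[of 0 xs i] i len2 ne by (simp add: ys_def)
  have ys1: "ys!1 = xs!((i+1) mod length xs)"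
    using nth_rotate[of 1 xs i] i len2 by (simp add: ys_def)
  have lys: "length ys = n" using less.prems(1) by (simp add: ys_def)
  have "successively ?A xs \<and> ?A (last xs) (hd xs)" using allA cyc_conv[OF ne, of ?A] by blast
  then have cy: "successively ?A ys \<and> ?A (last ys) (hd ys)"
    using cyc_rotate[of ?A xs i] ne by (simp add: ys_def)
  have dys: "distinct ys" using dist by (simp add: ys_def)
  obtain F0 F1 rest where ysd: "ys = F0 # F1 # rest"
    using two_cons[of ys] len2 lys less.prems(1) by auto
  have st01: "strong_attack sig q F0 F1" using st ys0 ys1 ysd by simp
  then have A01: "?A F0 F1" unfolding strong_attack_def by blast
  show ?case
  proof (cases rest)
    case Nil
    then have "?A F1 F0" using cy ysd by simp
    then show ?thesis using st01 A01 by blast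
  next
    case (Cons F2 rest')
    have A12: "?A F1 F2" using cy ysd Cons by simp
    have d: "distinct (F0 # F1 # F2 # rest')" using dys ysd Cons by simp
    have lastA: "?A (last (F2 # rest')) F0" using cy ysd Cons by simp
    have sr: "successively ?A (F2 # rest')" using cy ysd Cons by simp
    have "F0 \<noteq> F2" using d by simp
    from lemmaB[OF acyc A01 A12 this] have "?A F0 F2 \<or> ?A F1 F0" .
    then show ?thesis
    proof
      assume "?A F1 F0" then show ?thesis using st01 A01 by blast
    next
      assume A02: "?A F0 F2"
      let ?C = "F0 # F2 # rest'"
      have cC: "attack_cycle sig q ?C"
        by (rule to_cycle) (use d A02 sr lastA in auto)
      have lC: "length ?C < n" using lys ysd Cons by simp
      show ?thesis
      proof (cases "strong_cycle sig q ?C")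
        case True then show ?thesis using less.IH[OF lC refl] by blast
      next
        case False
        let ?O = "oplus_closure sig q"
        have "\<forall>j<length ?C. ?O (?C!((j+1) mod length ?C)) \<subseteq> ?O (?C!j)"
        proof (intro allI impI)
          fix j assume j: "j < length ?C"
          have "?A (?C!j) (?C!((j+1) mod length ?C))" using cC j unfolding attack_cycle_def by blast
          moreover have "\<not> strong_attack sig q (?C!j) (?C!((j+1) mod length ?C))"
            using False cC j unfolding strong_cycle_def by blast
          ultimately have "key sig (?C!((j+1) mod length ?C)) \<subseteq> ?O (?C!j)"
            unfolding strong_attack_def by blast
          then show "?O (?C!((j+1) mod length ?C)) \<subseteq> ?O (?C!j)" by (rule weak_mono)
        qed
        moreover have neC: "?C \<noteq> []" by simp
        ultimately have w: "successively (\<lambda>a b. ?O b \<subseteq> ?O a) ?C \<and> ?O (hd ?C) \<subseteq> ?O (last ?C)"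
          using cyc_conv[OF neC, of "\<lambda>a b. ?O b \<subseteq> ?O a"] by blast
        then have O02: "?O F2 \<subseteq> ?O F0" by simp
        have nk: "\<not> key sig F1 \<subseteq> ?O F2" using st01 O02 unfolding strong_attack_def by blast
        define F3 where "F3 = hd (rest' @ [F0])"
        have A23: "?A F2 F3"
        proof (cases rest')
          case Nil then show ?thesis using lastA F3_def by simp
        next
          case (Cons a r) then show ?thesis using sr F3_def by simp
        qed
        have n13: "F1 \<noteq> F3"
        proof (cases rest')
          case Nil then show ?thesis using d F3_def by auto
        next
          case (Cons a r) then show ?thesis using d F3_def by auto
        qed
        from lemmaB[OF acyc A12 A23 n13] have "?A F1 F3 \<or> ?A F2 F1" .
        then show ?thesis
        proof
          assume A21: "?A F2 F1"
          then have "strong_attack sig q F2 F1" using nk unfolding strong_attack_def by blast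
          then show ?thesis using A12 A21 by blast
        next
          assume A13: "?A F1 F3"
          let ?D = "F0 # F1 # rest'"
          have sD: "successively ?A (F1 # rest') \<and> ?A (last ?D) (hd ?D)"
          proof (cases rest')
            case Nil then show ?thesis using A13 F3_def by simp
          next
            case (Cons a r)
            have "successively ?A rest'" using sr Cons by simp
            then show ?thesis using A13 F3_def lastA Cons by simp
          qed
          have cD: "attack_cycle sig q ?D"
            by (rule to_cycle) (use d A01 sD in auto)
          have "strong_cycle sig q ?D"
            unfolding strong_cycle_def using cD st01 by (intro conjI exI[of _ 0]) auto
          moreover have lD: "length ?D < n" using lys ysd Cons by simp
          ultimately show ?thesis using less.IH[OF lD refl] by blast
        qed
      qed
    qed
  qed
qed

theorem lemma4:
  fixes sig :: "'r signature" and q :: "('r, 'v, 'c) atom set"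
  assumes "bcq sig q"
    and "acyclic_query q"
    and "\<exists>cs. strong_cycle sig q cs"
  shows "\<exists>cs. strong_cycle sig q cs \<and> length cs = 2"
proof -
  obtain cs where "strong_cycle sig q cs" using assms(3) by blast
  then obtain A B where AB: "attacks sig q A B" "attacks sig q B A" "strong_attack sig q A B"
    using main[OF assms(2) refl] by blast
  have "A \<noteq> B" using AB(1) unfolding attacks_def by blast
  then have c: "attack_cycle sig q [A,B]"
    by (intro to_cycle) (use AB in auto)
  have "strong_cycle sig q [A,B]"
    unfolding strong_cycle_def using c AB(3) by (intro conjI exI[of _ 0]) auto
  then show ?thesis by (intro exI[of _ "[A,B]"]) simp
qed

end
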